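(* Let $G$ be a just infinite group that is not virtually abelian, let $Y$ be a finite set, let $H\le G^Y$ be an infra-direct product, and let $U\subseteq Y$ be minimal such that the restriction of $\psi_U$ to $H$, $H\to G^U$, is injective. Then for every finite index subgroup $L\le H$, $U$ is also minimal such that the restriction of $\psi_U$ to $L$, $L\to G^U$, is injective.
   Context: $G^Y$ is the direct product of copies of $G$ indexed by $Y$; for $y\in Y$, $\psi_y$ is the projection onto the $y$-th coordinate and for $U\subseteq Y$, $\psi_U=(\psi_u)_{u\in U}:G^Y\to G^U$. $H\le G^Y$ is an infra-direct product if $\psi_y(H)$ has finite index in $G$ for every $y\in Y$. A group is just infinite if it is infinite and every proper quotient is finite. *)

theory Defs
  imports "HOL-Algebra.Product_Groups"
begin

definition just_infinite :: "('a, 'b) monoid_scheme \<Rightarrow> bool" where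
  "just_infinite G \<longleftrightarrow> infinite (carrier G) \<and>
     (\<forall>N. N \<lhd> G \<longrightarrow> N \<noteq> {\<one>\<^bsub>G\<^esub>} \<longrightarrow> finite (carrier (G Mod N)))"

definition virtually_abelian :: "('a, 'b) monoid_scheme \<Rightarrow> bool" where
  "virtually_abelian G \<longleftrightarrow> (\<exists>A. subgroup A G \<and> finite (rcosets\<^bsub>G\<^esub> A) \<and>
      comm_group (G\<lparr>carrier := A\<rparr>))"

text \<open>The direct power G^Y, elements are extensional functions Y \<rightarrow> carrier G.\<close>
abbreviation power_group :: "('a, 'b) monoid_scheme \<Rightarrow> 'c set \<Rightarrow> ('c \<Rightarrow> 'a) monoid" where
  "power_group G Y \<equiv> product_group Y (\<lambda>_. G)"

definition psi :: "'c set \<Rightarrow> ('c \<Rightarrow> 'a) \<Rightarrow> ('c \<Rightarrow> 'a)" where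
  "psi U f = restrict f U"

definition infra_direct :: "('a, 'b) monoid_scheme \<Rightarrow> 'c set \<Rightarrow> ('c \<Rightarrow> 'a) set \<Rightarrow> bool" where
  "infra_direct G Y H \<longleftrightarrow> subgroup H (power_group G Y) \<and>
     (\<forall>y\<in>Y. finite (rcosets\<^bsub>G\<^esub> ((\<lambda>h. h y) ` H)))"

definition minimal_injective :: "'c set \<Rightarrow> ('c \<Rightarrow> 'a) set \<Rightarrow> 'c set \<Rightarrow> bool" where
  "minimal_injective Y H U \<longleftrightarrow> U \<subseteq> Y \<and> inj_on (psi U) H \<and>
     (\<forall>V. V \<subset> U \<longrightarrow> \<not> inj_on (psi V) H)"

end

theory Submission
  imports Defs
begin

context group begin

lemma cen_subgroup:
  assumes "S \<subseteq> carrier G"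
  shows "subgroup {g\<in>carrier G. \<forall>x\<in>S. g \<otimes> x = x \<otimes> g} G"
proof (rule subgroupI)
  have "\<one> \<in> {g\<in>carrier G. \<forall>x\<in>S. g \<otimes> x = x \<otimes> g}" using assms by auto
  thus "{g\<in>carrier G. \<forall>x\<in>S. g \<otimes> x = x \<otimes> g} \<noteq> {}" by blast
next
  fix a assume a: "a \<in> {g\<in>carrier G. \<forall>x\<in>S. g \<otimes> x = x \<otimes> g}"
  show "inv a \<in> {g\<in>carrier G. \<forall>x\<in>S. g \<otimes> x = x \<otimes> g}"
  proof (safe)
    show "inv a \<in> carrier G" using a by auto
    fix x assume x: "x \<in> S"
    hence xc: "x \<in> carrier G" using assms by auto
    have "a \<otimes> x = x \<otimes> a" using a x by auto
    have ac: "a \<in> carrier G" using a by auto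
    have "inv a \<otimes> x = inv a \<otimes> (x \<otimes> a) \<otimes> inv a" using ac xc by (simp add: m_assoc)
    also have "\<dots> = inv a \<otimes> (a \<otimes> x) \<otimes> inv a" using \<open>a \<otimes> x = x \<otimes> a\<close> by simp
    also have "\<dots> = x \<otimes> inv a" using ac xc by (simp add: m_assoc[symmetric])
    finally show "inv a \<otimes> x = x \<otimes> inv a" .
  qed
next
  fix a b assume a: "a \<in> {g\<in>carrier G. \<forall>x\<in>S. g \<otimes> x = x \<otimes> g}"
    and b: "b \<in> {g\<in>carrier G. \<forall>x\<in>S. g \<otimes> x = x \<otimes> g}"
  show "a \<otimes> b \<in> {g\<in>carrier G. \<forall>x\<in>S. g \<otimes> x = x \<otimes> g}"
  proof (safe)
    show "a \<otimes> b \<in> carrier G" using a b by auto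
    fix x assume x: "x \<in> S"
    hence xc: "x \<in> carrier G" using assms by auto
    have "a \<otimes> b \<otimes> x = a \<otimes> (b \<otimes> x)" using a b xc by (simp add: m_assoc)
    also have "\<dots> = a \<otimes> (x \<otimes> b)" using b x by auto
    also have "\<dots> = (a \<otimes> x) \<otimes> b" using a b xc by (simp add: m_assoc)
    also have "\<dots> = (x \<otimes> a) \<otimes> b" using a x by auto
    finally show "a \<otimes> b \<otimes> x = x \<otimes> (a \<otimes> b)" using a b xc by (simp add: m_assoc)
  qed
qed auto

lemma rcos_Int:
  assumes "subgroup A G" "subgroup B G" "a \<in> carrier G"
  shows "(A \<inter> B) #> a = (A #> a) \<inter> (B #> a)"
proof
  show "(A \<inter> B) #> a \<subseteq> (A #> a) \<inter> (B #> a)" unfolding r_coset_def by auto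
  show "(A #> a) \<inter> (B #> a) \<subseteq> (A \<inter> B) #> a"
  proof
    fix x assume "x \<in> (A #> a) \<inter> (B #> a)"
    then obtain h1 h2 where h: "h1 \<in> A" "h2 \<in> B" "x = h1 \<otimes> a" "x = h2 \<otimes> a"
      unfolding r_coset_def by auto
    have "h1 = h2" using h assms subgroup.mem_carrier right_cancel by metis
    thus "x \<in> (A \<inter> B) #> a" using h unfolding r_coset_def by auto
  qed
qed

lemma finite_index_Int:
  assumes "subgroup A G" "subgroup B G" "finite (rcosets A)" "finite (rcosets B)"
  shows "finite (rcosets (A \<inter> B))"
proof -
  have "rcosets (A \<inter> B) \<subseteq> (\<lambda>(P,Q). P \<inter> Q) ` (Sigma (rcosets A) (\<lambda>_. rcosets B))"
    unfolding RCOSETS_def using rcos_Int[OF assms(1,2)] by fastforce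
  thus ?thesis using assms(3,4) by (meson finite_SigmaI finite_imageI finite_subset)
qed

lemma conj_lemma:
  assumes "a \<in> carrier G" "b \<in> carrier G" "g \<in> carrier G"
    and "a \<otimes> (inv g \<otimes> b \<otimes> g) = (inv g \<otimes> b \<otimes> g) \<otimes> a"
  shows "(g \<otimes> a \<otimes> inv g) \<otimes> b = b \<otimes> (g \<otimes> a \<otimes> inv g)"
proof -
  have "g \<otimes> a \<otimes> inv g \<otimes> b = (g \<otimes> (a \<otimes> (inv g \<otimes> b \<otimes> g))) \<otimes> inv g"
    using assms(1-3) by (simp add: m_assoc)
  also have "\<dots> = (g \<otimes> ((inv g \<otimes> b \<otimes> g) \<otimes> a)) \<otimes> inv g" using assms(4) by simp
  also have "\<dots> = b \<otimes> (g \<otimes> a \<otimes> inv g)"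
    using assms(1-3) by (simp add: m_assoc[symmetric])
  finally show ?thesis .
qed

lemma finite_index_centralizer:
  assumes x: "x \<in> carrier G" and fin: "finite {inv g \<otimes> x \<otimes> g |g. g \<in> carrier G}"
  shows "finite (rcosets {g\<in>carrier G. g \<otimes> x = x \<otimes> g})"
proof -
  define C where "C = {g\<in>carrier G. g \<otimes> x = x \<otimes> g}"
  have sub: "subgroup C G" using cen_subgroup[of "{x}"] x unfolding C_def by simp
  define \<phi> where "\<phi> g = inv g \<otimes> x \<otimes> g" for g
  have key: "C #> g = C #> g'" if g: "g \<in> carrier G" "g' \<in> carrier G" "\<phi> g = \<phi> g'" for g g'
  proof -
    have "g' \<otimes> inv g \<otimes> x = g' \<otimes> (\<phi> g) \<otimes> inv g" using g(1,2) x unfolding \<phi>_def by (simp add: m_assoc)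
    also have "\<dots> = g' \<otimes> (\<phi> g') \<otimes> inv g" using g by simp
    also have "\<dots> = x \<otimes> (g' \<otimes> inv g)" using g(1,2) x unfolding \<phi>_def by (simp add: m_assoc[symmetric])
    finally have "g' \<otimes> inv g \<in> C" using g unfolding C_def by auto
    hence "C #> (g' \<otimes> inv g) = C" using subgroup.rcos_const[OF sub] is_group by blast
    hence "C #> g' = C #> g" using coset_mult_inv1 g sub subgroup.subset by blast
    thus ?thesis by simp
  qed
  have "rcosets C \<subseteq> (\<lambda>y. C #> (SOME g. g \<in> carrier G \<and> \<phi> g = y)) ` {inv g \<otimes> x \<otimes> g |g. g \<in> carrier G}"
  proof
    fix R assume "R \<in> rcosets C"
    then obtain g where g: "g \<in> carrier G" "R = C #> g" unfolding RCOSETS_def by auto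
    have ex: "\<exists>g'. g' \<in> carrier G \<and> \<phi> g' = \<phi> g" using g by auto
    have "(SOME g'. g' \<in> carrier G \<and> \<phi> g' = \<phi> g) \<in> carrier G \<and> \<phi> (SOME g'. g' \<in> carrier G \<and> \<phi> g' = \<phi> g) = \<phi> g"
      using someI_ex[OF ex] .
    hence "R = C #> (SOME g'. g' \<in> carrier G \<and> \<phi> g' = \<phi> g)" using key g by metis
    moreover have "\<phi> g \<in> {inv g \<otimes> x \<otimes> g |g. g \<in> carrier G}" using g unfolding \<phi>_def by auto
    ultimately show "R \<in> (\<lambda>y. C #> (SOME g. g \<in> carrier G \<and> \<phi> g = y)) ` {inv g \<otimes> x \<otimes> g |g. g \<in> carrier G}"
      by blast
  qed
  thus ?thesis using fin finite_subset unfolding C_def by blast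
qed

lemma conj_transfer:
  assumes A: "subgroup A G" "finite (rcosets A)" and f: "f \<in> carrier G"
    and fin: "finite {inv a \<otimes> f \<otimes> a |a. a \<in> A}"
  shows "finite {inv g \<otimes> f \<otimes> g |g. g \<in> carrier G}"
proof -
  define t where "t R = (SOME t. t \<in> R \<and> t \<in> carrier G)" for R
  have tR: "t R \<in> R \<and> t R \<in> carrier G" if hR: "R \<in> rcosets A" for R
  proof -
    obtain g where g: "g \<in> carrier G" "R = A #> g" using hR by (auto simp: RCOSETS_def)
    have "g \<in> R" unfolding g(2) by (rule rcos_self[OF g(1) A(1)])
    hence "\<exists>t. t \<in> R \<and> t \<in> carrier G" using g by auto
    thus ?thesis unfolding t_def by (rule someI_ex[where P="\<lambda>t. t \<in> R \<and> t \<in> carrier G"])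
  qed
  have "{inv g \<otimes> f \<otimes> g |g. g \<in> carrier G} \<subseteq>
      (\<Union>R\<in>rcosets A. (\<lambda>y. inv (t R) \<otimes> y \<otimes> t R) ` {inv a \<otimes> f \<otimes> a |a. a \<in> A})"
  proof
    fix z assume "z \<in> {inv g \<otimes> f \<otimes> g |g. g \<in> carrier G}"
    then obtain g where g: "g \<in> carrier G" "z = inv g \<otimes> f \<otimes> g" by auto
    define R where "R = A #> g"
    have R: "R \<in> rcosets A" unfolding R_def RCOSETS_def using g(1) by blast
    have "t R \<in> A #> g" "t R \<in> carrier G" using tR[OF R] unfolding R_def by blast+
    then obtain a where a: "a \<in> A" "t R = a \<otimes> g" unfolding r_coset_def by blast
    have ac: "a \<in> carrier G" using subgroup.mem_carrier[OF A(1) a(1)] .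
    have ia: "inv a \<in> A" using subgroup.m_inv_closed[OF A(1) a(1)] .
    have tc: "t R \<in> carrier G" by fact
    have "inv a \<otimes> t R = inv a \<otimes> (a \<otimes> g)" using a(2) by simp
    also have "\<dots> = g" using ac g(1) by (simp add: m_assoc[symmetric])
    finally have ge: "g = inv a \<otimes> t R" by simp
    have ig: "inv g = inv (t R) \<otimes> a" unfolding ge using ac tc by (simp add: inv_mult_group)
    have "z = inv (t R) \<otimes> a \<otimes> f \<otimes> (inv a \<otimes> t R)" using g(2) ig ge by simp
    also have "\<dots> = inv (t R) \<otimes> (inv (inv a) \<otimes> f \<otimes> inv a) \<otimes> t R"
      using ac tc f by (simp add: m_assoc)
    finally have "z = inv (t R) \<otimes> (inv (inv a) \<otimes> f \<otimes> inv a) \<otimes> t R" .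
    thus "z \<in> (\<Union>R\<in>rcosets A. (\<lambda>y. inv (t R) \<otimes> y \<otimes> t R) ` {inv a \<otimes> f \<otimes> a |a. a \<in> A})"
      using R ia by blast
  qed
  thus ?thesis using fin A(2) by (meson finite_UN_I finite_imageI finite_subset)
qed

lemma fc_virtually_abelian:
  assumes ji: "just_infinite G" and f: "f \<in> carrier G" "f \<noteq> \<one>"
    and fin: "finite {inv g \<otimes> f \<otimes> g |g. g \<in> carrier G}"
  shows "virtually_abelian G"
proof -
  define Cl where "Cl = {inv g \<otimes> f \<otimes> g |g. g \<in> carrier G}"
  have Clc: "Cl \<subseteq> carrier G" unfolding Cl_def using f by auto
  have Cl_conj: "inv g \<otimes> x \<otimes> g \<in> Cl" if x: "x \<in> Cl" and g: "g \<in> carrier G" for x g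
  proof -
    obtain h where h: "h \<in> carrier G" "x = inv h \<otimes> f \<otimes> h" using x unfolding Cl_def by blast
    have "inv g \<otimes> x \<otimes> g = inv (h \<otimes> g) \<otimes> f \<otimes> (h \<otimes> g)"
      using h g f by (simp add: inv_mult_group m_assoc)
    moreover have "h \<otimes> g \<in> carrier G" using h g by simp
    ultimately show ?thesis unfolding Cl_def by blast
  qed
  have fCl: "f \<in> Cl" unfolding Cl_def using f
    by (smt (verit) inv_one l_one mem_Collect_eq one_closed r_one)
  have finCl: "finite Cl" using fin unfolding Cl_def .
  have cls_fin: "finite {inv g \<otimes> x \<otimes> g |g. g \<in> carrier G}" if "x \<in> Cl" for x
  proof -
    have "{inv g \<otimes> x \<otimes> g |g. g \<in> carrier G} \<subseteq> Cl" using Cl_conj that by blast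
    thus ?thesis using finCl finite_subset by blast
  qed
  have finidx: "finite S \<Longrightarrow> S \<subseteq> Cl \<Longrightarrow> finite (rcosets {g\<in>carrier G. \<forall>x\<in>S. g \<otimes> x = x \<otimes> g})" for S
  proof (induction S rule: finite_induct)
    case empty
    have "rcosets {g\<in>carrier G. \<forall>x\<in>{}. g \<otimes> x = x \<otimes> g} \<subseteq> {carrier G}"
      unfolding RCOSETS_def using subgroup.rcos_const[OF subgroup_self is_group] by auto
    thus ?case using finite_subset by blast
  next
    case (insert x S)
    have xc: "x \<in> carrier G" using insert Clc by blast
    have eq: "{g\<in>carrier G. \<forall>y\<in>insert x S. g \<otimes> y = y \<otimes> g} =
       {g\<in>carrier G. \<forall>y\<in>S. g \<otimes> y = y \<otimes> g} \<inter> {g\<in>carrier G. g \<otimes> x = x \<otimes> g}" by auto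
    have s1: "subgroup {g\<in>carrier G. \<forall>y\<in>S. g \<otimes> y = y \<otimes> g} G"
      using cen_subgroup insert Clc by blast
    have s2: "subgroup {g\<in>carrier G. g \<otimes> x = x \<otimes> g} G" using cen_subgroup[of "{x}"] xc by simp
    have f1: "finite (rcosets {g\<in>carrier G. \<forall>y\<in>S. g \<otimes> y = y \<otimes> g})" using insert by blast
    have f2: "finite (rcosets {g\<in>carrier G. g \<otimes> x = x \<otimes> g})"
      using finite_index_centralizer[OF xc cls_fin] insert by blast
    show ?case unfolding eq by (rule finite_index_Int[OF s1 s2 f1 f2])
  qed
  define M where "M = {g\<in>carrier G. \<forall>x\<in>Cl. g \<otimes> x = x \<otimes> g}"
  have Msub: "subgroup M G" unfolding M_def using cen_subgroup Clc by blast
  have Mfin: "finite (rcosets M)" unfolding M_def using finidx finCl by blast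
  have Mnormal: "M \<lhd> G" unfolding normal_inv_iff
  proof (intro conjI ballI Msub)
    fix g m assume g: "g \<in> carrier G" and m: "m \<in> M"
    have mc: "m \<in> carrier G" using m unfolding M_def by blast
    show "g \<otimes> m \<otimes> inv g \<in> M" unfolding M_def
    proof (safe)
      show "g \<otimes> m \<otimes> inv g \<in> carrier G" using g mc by simp
      fix x assume x: "x \<in> Cl"
      have "m \<otimes> (inv g \<otimes> x \<otimes> g) = (inv g \<otimes> x \<otimes> g) \<otimes> m"
        using m Cl_conj[OF x g] unfolding M_def by blast
      thus "g \<otimes> m \<otimes> inv g \<otimes> x = x \<otimes> (g \<otimes> m \<otimes> inv g)"
        using conj_lemma mc g x Clc by blast
    qed
  qed
  define Z where "Z = {g\<in>carrier G. \<forall>m\<in>M. g \<otimes> m = m \<otimes> g}"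
  have Zsub: "subgroup Z G" unfolding Z_def using cen_subgroup Msub subgroup.subset by blast
  have Znormal: "Z \<lhd> G" unfolding normal_inv_iff
  proof (intro conjI ballI Zsub)
    fix g z assume g: "g \<in> carrier G" and z: "z \<in> Z"
    have zc: "z \<in> carrier G" using z unfolding Z_def by blast
    show "g \<otimes> z \<otimes> inv g \<in> Z" unfolding Z_def
    proof (safe)
      show "g \<otimes> z \<otimes> inv g \<in> carrier G" using g zc by simp
      fix m assume m: "m \<in> M"
      have mc: "m \<in> carrier G" using m unfolding M_def by blast
      have "inv g \<otimes> m \<otimes> inv (inv g) \<in> M" using Mnormal g m inv_closed unfolding normal_inv_iff by blast
      hence "inv g \<otimes> m \<otimes> g \<in> M" using g by simp
      hence "z \<otimes> (inv g \<otimes> m \<otimes> g) = (inv g \<otimes> m \<otimes> g) \<otimes> z"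
        using z unfolding Z_def by blast
      thus "g \<otimes> z \<otimes> inv g \<otimes> m = m \<otimes> (g \<otimes> z \<otimes> inv g)"
        using conj_lemma zc g mc by blast
    qed
  qed
  have fZ: "f \<in> Z" unfolding Z_def M_def using f fCl by auto
  have "Z \<noteq> {\<one>}" using fZ f by blast
  hence "finite (carrier (G Mod Z))" using ji Znormal unfolding just_infinite_def by blast
  hence Zfin: "finite (rcosets Z)" unfolding FactGroup_def by simp
  define A where "A = Z \<inter> M"
  have Asub: "subgroup A G" unfolding A_def using subgroups_Inter_pair Zsub Msub by blast
  have Afin: "finite (rcosets A)" unfolding A_def using finite_index_Int Zsub Msub Zfin Mfin by blast
  have Acomm: "comm_group (G\<lparr>carrier := A\<rparr>)"
  proof (rule group.group_comm_groupI)
    show "group (G\<lparr>carrier := A\<rparr>)" using subgroup_imp_group Asub by blast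
    fix x y assume "x \<in> carrier (G\<lparr>carrier := A\<rparr>)" "y \<in> carrier (G\<lparr>carrier := A\<rparr>)"
    hence "x \<in> Z" "y \<in> M" unfolding A_def by auto
    thus "x \<otimes>\<^bsub>G\<lparr>carrier := A\<rparr>\<^esub> y = y \<otimes>\<^bsub>G\<lparr>carrier := A\<rparr>\<^esub> x" unfolding Z_def by simp
  qed
  show ?thesis unfolding virtually_abelian_def using Asub Afin Acomm by blast
qed

end

lemma pg_group: "group G \<Longrightarrow> group (power_group G Y)" by simp

lemma pg_mult: "i \<in> Y \<Longrightarrow> (a \<otimes>\<^bsub>power_group G Y\<^esub> b) i = a i \<otimes>\<^bsub>G\<^esub> b i" by simp

lemma pg_inv: "group G \<Longrightarrow> a \<in> carrier (power_group G Y) \<Longrightarrow> i \<in> Y \<Longrightarrow>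
  (inv\<^bsub>power_group G Y\<^esub> a) i = inv\<^bsub>G\<^esub> (a i)"
  by (subst inv_product_group) auto

lemma pg_one: "i \<in> Y \<Longrightarrow> \<one>\<^bsub>power_group G Y\<^esub> i = \<one>\<^bsub>G\<^esub>" by simp

theorem lemma3p2:
  fixes G :: "('a, 'b) monoid_scheme" and Y :: "'c set"
    and H L :: "('c \<Rightarrow> 'a) set" and U :: "'c set"
  assumes "group G"
    and "just_infinite G"
    and "\<not> virtually_abelian G"
    and "finite Y"
    and "infra_direct G Y H"
    and "minimal_injective Y H U"
    and "subgroup L (power_group G Y)"
    and "L \<subseteq> H"
    and "finite (rcosets\<^bsub>(power_group G Y)\<lparr>carrier := H\<rparr>\<^esub> L)"
  shows "minimal_injective Y L U"
proof -
  interpret G: group G by fact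
  define P where "P = power_group G Y"
  interpret P: group P unfolding P_def using pg_group assms(1) by blast
  have Hsub: "subgroup H P" using assms(5) unfolding infra_direct_def P_def by (rule conjunct1)
  have Lsub: "subgroup L P" using assms(7) unfolding P_def .
  have UY: "U \<subseteq> Y" and injU: "inj_on (psi U) H" and minH: "\<And>V. V \<subset> U \<Longrightarrow> \<not> inj_on (psi V) H"
    using assms(6) unfolding minimal_injective_def by (blast, blast, blast)
  have Hc: "h \<in> carrier P" if "h \<in> H" for h using subgroup.mem_carrier[OF Hsub that] .
  have mult: "(a \<otimes>\<^bsub>P\<^esub> b) i = a i \<otimes>\<^bsub>G\<^esub> b i" if "i \<in> Y" for a b i
    unfolding P_def by (rule pg_mult[OF that])
  have inv: "(inv\<^bsub>P\<^esub> a) i = inv\<^bsub>G\<^esub> (a i)" if "a \<in> carrier P" "i \<in> Y" for a i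
    unfolding P_def by (rule pg_inv[OF assms(1) that[unfolded P_def]])
  have one: "\<one>\<^bsub>P\<^esub> i = \<one>\<^bsub>G\<^esub>" if "i \<in> Y" for i unfolding P_def using that by simp
  have valc: "a i \<in> carrier G" if "a \<in> carrier P" "i \<in> Y" for a i
  proof -
    have "a \<in> (\<Pi>\<^sub>E i\<in>Y. carrier G)" using that(1) unfolding P_def by simp
    thus ?thesis using PiE_mem that(2) by fast
  qed
  have "\<not> inj_on (psi V) L" if VU: "V \<subset> U" for V
  proof
    assume injL: "inj_on (psi V) L"
    have VY: "V \<subseteq> Y" using VU UY by blast
    obtain h1 h2 where h: "h1 \<in> H" "h2 \<in> H" "h1 \<noteq> h2" "psi V h1 = psi V h2"
      using minH[OF VU] unfolding inj_on_def by blast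
    define K where "K = {k \<in> H. \<forall>v\<in>V. k v = \<one>\<^bsub>G\<^esub>}"
    have Ltriv: "l = \<one>\<^bsub>P\<^esub>" if "l \<in> L" "l \<in> K" for l
    proof -
      have "\<one>\<^bsub>P\<^esub> \<in> L" using Lsub subgroup.one_closed by blast
      moreover have "psi V l = psi V \<one>\<^bsub>P\<^esub>"
        unfolding psi_def using that VY one unfolding K_def by (auto intro!: restrict_ext)
      ultimately show ?thesis using injL that(1) unfolding inj_on_def by blast
    qed
    have Kdiv: "a \<otimes>\<^bsub>P\<^esub> inv\<^bsub>P\<^esub> b \<in> K" if "a \<in> K" "b \<in> K" for a b
    proof -
      have "a \<in> H" "b \<in> H" using that unfolding K_def by auto
      hence "a \<otimes>\<^bsub>P\<^esub> inv\<^bsub>P\<^esub> b \<in> H" using subgroup.m_closed[OF Hsub _ subgroup.m_inv_closed[OF Hsub]] by blast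
      moreover have "(a \<otimes>\<^bsub>P\<^esub> inv\<^bsub>P\<^esub> b) v = \<one>\<^bsub>G\<^esub>" if "v \<in> V" for v
        using that \<open>a \<in> K\<close> \<open>b \<in> K\<close> VY mult inv Hc \<open>b \<in> H\<close> unfolding K_def by auto
      ultimately show ?thesis unfolding K_def by blast
    qed
    have Kconj: "inv\<^bsub>P\<^esub> h \<otimes>\<^bsub>P\<^esub> k \<otimes>\<^bsub>P\<^esub> h \<in> K" if "h \<in> H" "k \<in> K" for h k
    proof -
      have "k \<in> H" using that unfolding K_def by auto
      hence "inv\<^bsub>P\<^esub> h \<otimes>\<^bsub>P\<^esub> k \<otimes>\<^bsub>P\<^esub> h \<in> H"
        using subgroup.m_closed[OF Hsub subgroup.m_closed[OF Hsub subgroup.m_inv_closed[OF Hsub that(1)]] that(1)] by blast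
      moreover have "(inv\<^bsub>P\<^esub> h \<otimes>\<^bsub>P\<^esub> k \<otimes>\<^bsub>P\<^esub> h) v = \<one>\<^bsub>G\<^esub>" if "v \<in> V" for v
      proof -
        have vY: "v \<in> Y" using that VY by blast
        have "(inv\<^bsub>P\<^esub> h \<otimes>\<^bsub>P\<^esub> k \<otimes>\<^bsub>P\<^esub> h) v = inv\<^bsub>G\<^esub> (h v) \<otimes>\<^bsub>G\<^esub> k v \<otimes>\<^bsub>G\<^esub> h v"
          using mult inv Hc \<open>h \<in> H\<close> vY by simp
        also have "\<dots> = \<one>\<^bsub>G\<^esub>" using \<open>k \<in> K\<close> that valc Hc \<open>h \<in> H\<close> vY unfolding K_def by auto
        finally show ?thesis .
      qed
      ultimately show ?thesis unfolding K_def by blast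
    qed
    define k where "k = h1 \<otimes>\<^bsub>P\<^esub> inv\<^bsub>P\<^esub> h2"
    have kK: "k \<in> K"
    proof -
      have "k \<in> H" unfolding k_def using subgroup.m_closed[OF Hsub h(1) subgroup.m_inv_closed[OF Hsub h(2)]] .
      moreover have "k v = \<one>\<^bsub>G\<^esub>" if "v \<in> V" for v
      proof -
        have vY: "v \<in> Y" using that VY by blast
        have "h1 v = h2 v" using h(4) that unfolding psi_def by (metis restrict_apply)
        thus ?thesis unfolding k_def using mult inv Hc h vY valc by simp
      qed
      ultimately show ?thesis unfolding K_def by blast
    qed
    have k1: "k \<noteq> \<one>\<^bsub>P\<^esub>"
    proof
      assume "k = \<one>\<^bsub>P\<^esub>"
      have c1: "h1 \<in> carrier P" "h2 \<in> carrier P" using Hc h by auto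
      have "h1 = h1 \<otimes>\<^bsub>P\<^esub> inv\<^bsub>P\<^esub> h2 \<otimes>\<^bsub>P\<^esub> h2" using c1 by (simp add: P.m_assoc)
      also have "\<dots> = h2" using \<open>k = \<one>\<^bsub>P\<^esub>\<close> c1 unfolding k_def by simp
      finally have "h1 = h2" .
      thus False using h by blast
    qed
    have kH: "k \<in> H" using kK unfolding K_def by blast
    have eqdiv: "a = b" if "a \<in> carrier P" "b \<in> carrier P" "a \<otimes>\<^bsub>P\<^esub> inv\<^bsub>P\<^esub> b = \<one>\<^bsub>P\<^esub>" for a b
    proof -
      have "a = a \<otimes>\<^bsub>P\<^esub> inv\<^bsub>P\<^esub> b \<otimes>\<^bsub>P\<^esub> b" using that(1,2) by (simp add: P.m_assoc)
      also have "\<dots> = b" using that by simp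
      finally show ?thesis .
    qed
    have rc: "rcosets\<^bsub>P\<lparr>carrier := H\<rparr>\<^esub> L = (\<lambda>a. L #>\<^bsub>P\<^esub> a) ` H"
      unfolding RCOSETS_def r_coset_def by auto
    have finrc: "finite ((\<lambda>a. L #>\<^bsub>P\<^esub> a) ` H)" using assms(9)[folded P_def] unfolding rc .
    have injK: "inj_on (\<lambda>a. L #>\<^bsub>P\<^esub> a) K"
    proof (rule inj_onI)
      fix k1 k2 assume k: "k1 \<in> K" "k2 \<in> K" "L #>\<^bsub>P\<^esub> k1 = L #>\<^bsub>P\<^esub> k2"
      have kc: "k1 \<in> carrier P" "k2 \<in> carrier P" using k(1,2) Hc unfolding K_def by auto
      have "k1 \<in> L #>\<^bsub>P\<^esub> k1" by (rule P.rcos_self[OF kc(1) Lsub])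
      hence "k1 \<in> L #>\<^bsub>P\<^esub> k2" using k(3) by simp
      hence "k1 \<otimes>\<^bsub>P\<^esub> inv\<^bsub>P\<^esub> k2 \<in> L" by (rule subgroup.rcos_module_imp[OF Lsub P.is_group kc(2)])
      hence "k1 \<otimes>\<^bsub>P\<^esub> inv\<^bsub>P\<^esub> k2 = \<one>\<^bsub>P\<^esub>" using Ltriv Kdiv[OF k(1,2)] by blast
      thus "k1 = k2" using eqdiv kc by blast
    qed
    have "(\<lambda>a. L #>\<^bsub>P\<^esub> a) ` K \<subseteq> (\<lambda>a. L #>\<^bsub>P\<^esub> a) ` H" unfolding K_def by blast
    hence "finite ((\<lambda>a. L #>\<^bsub>P\<^esub> a) ` K)" using finrc finite_subset by blast
    hence finK: "finite K" using injK finite_imageD by blast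
    obtain u where u: "u \<in> U" "k u \<noteq> \<one>\<^bsub>G\<^esub>"
    proof (rule ccontr)
      assume "\<not> thesis"
      hence all: "\<forall>u\<in>U. k u = \<one>\<^bsub>G\<^esub>" using that by blast
      have "psi U k = psi U \<one>\<^bsub>P\<^esub>" unfolding psi_def
      proof (rule restrict_ext)
        fix u assume "u \<in> U"
        thus "k u = \<one>\<^bsub>P\<^esub> u" using all one UY by auto
      qed
      moreover have "\<one>\<^bsub>P\<^esub> \<in> H" by (rule subgroup.one_closed[OF Hsub])
      ultimately have "k = \<one>\<^bsub>P\<^esub>" using injU kH unfolding inj_on_def by blast
      thus False using k1 by blast
    qed
    have uY: "u \<in> Y" using u UY by blast
    define f where "f = k u"
    have fc: "f \<in> carrier G" unfolding f_def using valc[OF Hc[OF kH] uY] .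
    define A where "A = (\<lambda>h. h u) ` H"
    have Asub: "subgroup A G"
    proof (rule G.subgroupI)
      show "A \<subseteq> carrier G" unfolding A_def using valc Hc uY by blast
      have "\<one>\<^bsub>P\<^esub> u \<in> A" unfolding A_def using subgroup.one_closed[OF Hsub] by blast
      thus "A \<noteq> {}" by blast
    next
      fix a assume "a \<in> A"
      then obtain h where h: "h \<in> H" "a = h u" unfolding A_def by blast
      have "inv\<^bsub>P\<^esub> h \<in> H" by (rule subgroup.m_inv_closed[OF Hsub h(1)])
      moreover have "(inv\<^bsub>P\<^esub> h) u = inv\<^bsub>G\<^esub> a" using inv[OF Hc[OF h(1)] uY] h(2) by simp
      ultimately show "inv\<^bsub>G\<^esub> a \<in> A" unfolding A_def by (metis image_eqI)
    next
      fix a b assume "a \<in> A" "b \<in> A"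
      then obtain h1 h2 where h: "h1 \<in> H" "a = h1 u" "h2 \<in> H" "b = h2 u" unfolding A_def by blast
      have "h1 \<otimes>\<^bsub>P\<^esub> h2 \<in> H" by (rule subgroup.m_closed[OF Hsub h(1,3)])
      moreover have "(h1 \<otimes>\<^bsub>P\<^esub> h2) u = a \<otimes>\<^bsub>G\<^esub> b" using mult[OF uY] h by simp
      ultimately show "a \<otimes>\<^bsub>G\<^esub> b \<in> A" unfolding A_def by (metis image_eqI)
    qed
    have Afin: "finite (rcosets\<^bsub>G\<^esub> A)" using assms(5) uY unfolding infra_direct_def A_def by blast
    have "{inv\<^bsub>G\<^esub> a \<otimes>\<^bsub>G\<^esub> f \<otimes>\<^bsub>G\<^esub> a |a. a \<in> A} \<subseteq> (\<lambda>k. k u) ` K"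
    proof
      fix z assume "z \<in> {inv\<^bsub>G\<^esub> a \<otimes>\<^bsub>G\<^esub> f \<otimes>\<^bsub>G\<^esub> a |a. a \<in> A}"
      then obtain h where h: "h \<in> H" "z = inv\<^bsub>G\<^esub> (h u) \<otimes>\<^bsub>G\<^esub> f \<otimes>\<^bsub>G\<^esub> h u" unfolding A_def by blast
      have "(inv\<^bsub>P\<^esub> h \<otimes>\<^bsub>P\<^esub> k \<otimes>\<^bsub>P\<^esub> h) u = z"
        unfolding h(2) f_def using mult[OF uY] inv[OF Hc[OF h(1)] uY] by simp
      moreover have "inv\<^bsub>P\<^esub> h \<otimes>\<^bsub>P\<^esub> k \<otimes>\<^bsub>P\<^esub> h \<in> K" by (rule Kconj[OF h(1) kK])
      ultimately show "z \<in> (\<lambda>k. k u) ` K" by (metis image_eqI)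
    qed
    hence "finite {inv\<^bsub>G\<^esub> a \<otimes>\<^bsub>G\<^esub> f \<otimes>\<^bsub>G\<^esub> a |a. a \<in> A}" using finK finite_subset by blast
    hence "finite {inv\<^bsub>G\<^esub> g \<otimes>\<^bsub>G\<^esub> f \<otimes>\<^bsub>G\<^esub> g |g. g \<in> carrier G}"
      by (rule G.conj_transfer[OF Asub Afin fc])
    hence "virtually_abelian G" using G.fc_virtually_abelian[OF assms(2) fc] u(2) unfolding f_def by blast
    thus False using assms(3) by blast
  qed
  hence "\<forall>V. V \<subset> U \<longrightarrow> \<not> inj_on (psi V) L" by (intro allI impI)
  thus ?thesis unfolding minimal_injective_def using UY inj_on_subset[OF injU assms(8)] by (intro conjI)
qed

end
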